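(* If $A\subset\mathbb{R}^d$ is a finite set in general position, then for all $k\in\mathbb{N}$, $\dim(\mathrm{Del}_{\infty,k})\le\binom{d+1}{\lfloor\frac{d+1}{2}\rfloor}$.
   Context: For $\tilde A\subseteq A$ with $|\tilde A|=k$, the order-$k$ Voronoi region is $\mathrm{Vor}(\tilde A)=\{b\in\mathbb{R}^d: \|b-\tilde a\|\le\|b-a\|\ \forall\tilde a\in\tilde A, a\in A\setminus\tilde A\}$, and $\mathrm{Ball}_r(\tilde A)=\{b: \|b-\tilde a\|\le r\ \forall\tilde a\in\tilde A\}$. The order-$k$ Delaunay complex $\mathrm{Del}_{r,k}$ is the nerve of $\{\mathrm{Ball}_r(\tilde A)\cap\mathrm{Vor}(\tilde A): |\tilde A|=k\}$, i.e. the simplicial complex whose simplices are sets of $k$-subsets $\tilde A$ whose sets $\mathrm{Ball}_r(\tilde A)\cap\mathrm{Vor}(\tilde A)$ have nonempty common intersection. $\mathrm{Del}_{\infty,k}$ denotes the largest of the complexes $\mathrm{Del}_{r,k}$, $r\ge0$ (equivalently, the nerve of the order-$k$ Voronoi regions). *)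

theory Defs
  imports "HOL-Analysis.Analysis"
begin

text \<open>Points live in a Euclidean space 'a with d = DIM('a).\<close>

definition general_position :: "'a::euclidean_space set \<Rightarrow> bool" where
  "general_position A \<longleftrightarrow>
     (\<forall>B\<subseteq>A. card B \<le> DIM('a) + 1 \<longrightarrow> \<not> affine_dependent B) \<and>
     (\<forall>B\<subseteq>A. card B = DIM('a) + 2 \<longrightarrow> \<not> (\<exists>c r. \<forall>b\<in>B. dist b c = r))"

definition Vor :: "'a::euclidean_space set \<Rightarrow> 'a set \<Rightarrow> 'a set" where
  "Vor A At = {b. \<forall>t\<in>At. \<forall>a\<in>A - At. dist b t \<le> dist b a}"

text \<open>Order-k Delaunay complex with r = infinity: the nerve of the order-k Voronoi regions
  (simplices are nonempty sets of k-subsets of A whose regions have a common point).\<close>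
definition Del_infty :: "'a::euclidean_space set \<Rightarrow> nat \<Rightarrow> 'a set set set" where
  "Del_infty A k = {S. S \<noteq> {} \<and> S \<subseteq> {At. At \<subseteq> A \<and> card At = k} \<and>
                       (\<Inter>At\<in>S. Vor A At) \<noteq> {}}"

definition complex_dim :: "'b set set \<Rightarrow> int" where
  "complex_dim K = (if K = {} then -1 else int (Max (card ` K)) - 1)"

end

theory Submission
  imports Defs
begin

lemma choose_mono_n: "n \<le> m \<Longrightarrow> n choose k \<le> m choose (k::nat)"
proof -
  assume nm: "n \<le> m"
  have "card {B. B \<subseteq> {..<n} \<and> card B = k} \<le> card {B. B \<subseteq> {..<m} \<and> card B = k}"
    by (rule card_mono) (use nm in auto)
  then show ?thesis by (simp add: n_subsets)
qed

lemma simplex_bound: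
  fixes A :: "'a::euclidean_space set" and k :: nat
  assumes fin: "finite A" and gp: "general_position A" and S: "S \<in> Del_infty A k"
  shows "card S \<le> (DIM('a) + 1) choose ((DIM('a) + 1) div 2)"
proof -
  let ?C = "(DIM('a) + 1) choose ((DIM('a) + 1) div 2)"
  have Sne: "S \<noteq> {}" and Ssub: "\<And>At. At \<in> S \<Longrightarrow> At \<subseteq> A \<and> card At = k"
    and ex: "(\<Inter>At\<in>S. Vor A At) \<noteq> {}" using S unfolding Del_infty_def by auto
  obtain b where b: "\<And>At. At \<in> S \<Longrightarrow> b \<in> Vor A At" using ex by auto
  have vor: "\<And>At t a. At \<in> S \<Longrightarrow> t \<in> At \<Longrightarrow> a \<in> A \<Longrightarrow> a \<notin> At \<Longrightarrow> dist b t \<le> dist b a"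
    using b unfolding Vor_def by blast
  obtain At0 where At0: "At0 \<in> S" using Sne by auto
  have finAt: "\<And>At. At \<in> S \<Longrightarrow> finite At" using Ssub fin finite_subset by blast
  show ?thesis
  proof (cases "At0 = {}")
    case True
    then have "k = 0" using Ssub[OF At0] by auto
    then have "\<And>At. At \<in> S \<Longrightarrow> At = {}" using Ssub finAt by auto
    then have "S \<subseteq> {{}}" by auto
    then have "card S \<le> 1" using card_mono[of "{{}}" S] by auto
    moreover have "1 \<le> ?C" by (simp add: Suc_leI)
    ultimately show ?thesis by linarith
  next
    case False
    define r where "r = Max (dist b ` At0)"
    have fin0: "finite At0" using finAt At0 .
    have r0: "\<And>t. t \<in> At0 \<Longrightarrow> dist b t \<le> r" unfolding r_def using fin0 by auto
    obtain a0 where a0: "a0 \<in> At0" "dist b a0 = r"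
    proof -
      have "Max (dist b ` At0) \<in> dist b ` At0" using Max_in[of "dist b ` At0"] fin0 False by auto
      then show ?thesis using that unfolding r_def by auto
    qed
    define L where "L = {a\<in>A. dist b a < r}"
    define E where "E = {a\<in>A. dist b a = r}"
    have eqAt: "\<And>At. At \<in> S \<Longrightarrow> At0 \<subseteq> At \<Longrightarrow> At = At0"
    proof -
      fix At assume "At \<in> S" "At0 \<subseteq> At"
      then show "At = At0" using card_subset_eq[of At At0] finAt Ssub At0 by auto
    qed
    have up: "\<And>At. At \<in> S \<Longrightarrow> At \<subseteq> L \<union> E"
    proof
      fix At t assume AtS: "At \<in> S" and t: "t \<in> At"
      have tA: "t \<in> A" using Ssub AtS t by auto
      show "t \<in> L \<union> E"
      proof (rule ccontr)
        assume "t \<notin> L \<union> E"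
        then have gt: "dist b t > r" using tA unfolding L_def E_def by auto
        have "At0 \<subseteq> At"
        proof
          fix a assume a: "a \<in> At0"
          show "a \<in> At"
          proof (rule ccontr)
            assume "a \<notin> At"
            then have "dist b t \<le> dist b a" using vor[OF AtS t] Ssub At0 a by auto
            then show False using r0[OF a] gt by auto
          qed
        qed
        then have "At = At0" using eqAt AtS by auto
        then show False using r0 t gt by fastforce
      qed
    qed
    have low: "\<And>At. At \<in> S \<Longrightarrow> L \<subseteq> At"
    proof
      fix At a assume AtS: "At \<in> S" and aL: "a \<in> L"
      have aA: "a \<in> A" and ar: "dist b a < r" using aL unfolding L_def by auto
      show "a \<in> At"
      proof (rule ccontr)
        assume naAt: "a \<notin> At"
        have small: "\<And>t. t \<in> At \<Longrightarrow> dist b t < r"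
          using vor[OF AtS _ aA naAt] ar by fastforce
        have "a \<in> At0"
        proof (rule ccontr)
          assume "a \<notin> At0"
          then have "dist b a0 \<le> dist b a" using vor[OF At0 a0(1) aA] by auto
          then show False using a0 ar by auto
        qed
        have "At \<subseteq> At0"
        proof
          fix t assume t: "t \<in> At"
          have tA: "t \<in> A" using Ssub AtS t by auto
          show "t \<in> At0"
          proof (rule ccontr)
            assume "t \<notin> At0"
            then have "dist b a0 \<le> dist b t" using vor[OF At0 a0(1) tA] by auto
            then show False using a0 small[OF t] by auto
          qed
        qed
        then have "At = At0" using card_subset_eq[of At0 At] finAt Ssub At0 AtS by auto
        then show False using naAt \<open>a \<in> At0\<close> by auto
      qed
    qed
    have LE: "L \<inter> E = {}" unfolding L_def E_def by auto
    have finE: "finite E" unfolding E_def using fin by auto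
    have finL: "finite L" unfolding L_def using fin by auto
    have cardE: "card E \<le> DIM('a) + 1"
    proof (rule ccontr)
      assume "\<not> card E \<le> DIM('a) + 1"
      then obtain B where B: "B \<subseteq> E" "card B = DIM('a) + 2"
        using obtain_subset_with_card_n[of "DIM('a) + 2" E] by auto
      have "B \<subseteq> A" using B unfolding E_def by auto
      moreover have "\<forall>x\<in>B. dist x b = r" using B unfolding E_def by (auto simp: dist_commute)
      ultimately show False using gp B(2) unfolding general_position_def by blast
    qed
    define j where "j = k - card L"
    have inj: "inj_on (\<lambda>At. At \<inter> E) S"
    proof
      fix X Y assume X: "X \<in> S" and Y: "Y \<in> S" and eq: "X \<inter> E = Y \<inter> E"
      have "X = L \<union> (X \<inter> E)" using up[OF X] low[OF X] by auto
      moreover have "Y = L \<union> (Y \<inter> E)" using up[OF Y] low[OF Y] by auto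
      ultimately show "X = Y" using eq by simp
    qed
    have img: "(\<lambda>At. At \<inter> E) ` S \<subseteq> {B. B \<subseteq> E \<and> card B = j}"
    proof (rule image_subsetI)
      fix At assume AtS: "At \<in> S"
      have "At = L \<union> (At \<inter> E)" using up[OF AtS] low[OF AtS] by auto
      then have "card At = card L + card (At \<inter> E)"
        using card_Un_disjoint[of L "At \<inter> E"] finL finE LE by auto
      then show "At \<inter> E \<in> {B. B \<subseteq> E \<and> card B = j}" using Ssub[OF AtS] unfolding j_def by auto
    qed
    have "card S = card ((\<lambda>At. At \<inter> E) ` S)" using card_image[OF inj] by simp
    also have "\<dots> \<le> card {B. B \<subseteq> E \<and> card B = j}"
      by (rule card_mono) (use finE img in auto)
    also have "\<dots> = card E choose j" using n_subsets[OF finE] .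
    also have "\<dots> \<le> (DIM('a) + 1) choose j" using choose_mono_n[OF cardE] .
    also have "\<dots> \<le> ?C" by (rule binomial_maximum)
    finally show ?thesis .
  qed
qed

theorem lemma13:
  fixes A :: "'a::euclidean_space set" and k :: nat
  assumes "finite A" and "general_position A"
  shows "complex_dim (Del_infty A k) \<le> int ((DIM('a) + 1) choose ((DIM('a) + 1) div 2))"
proof (cases "Del_infty A k = {}")
  case True
  then show ?thesis unfolding complex_dim_def by simp
next
  case False
  have "Del_infty A k \<subseteq> Pow (Pow A)" unfolding Del_infty_def by auto
  then have fD: "finite (Del_infty A k)" using assms(1) finite_subset by blast
  have "Max (card ` Del_infty A k) \<in> card ` Del_infty A k"
    using Max_in fD False by auto
  then obtain S where "S \<in> Del_infty A k" "Max (card ` Del_infty A k) = card S" by auto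
  then have "Max (card ` Del_infty A k) \<le> (DIM('a) + 1) choose ((DIM('a) + 1) div 2)"
    using simplex_bound[OF assms] by auto
  then show ?thesis unfolding complex_dim_def using False by simp
qed

end
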